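(* Fix $d\in(0,\psi_{\max})$. For $\alpha\in(0,1-d/\varphi_{\max})$ define $$v_{\rm in}^*(\alpha,d)=\alpha\beta\gamma\left(s_{\rm in}-\varphi^{-1}\!\left(\frac{d}{1-\alpha}\right)\right),\qquad f_0^*(\alpha,d)=\frac{d\,\big(v_{\rm in}^*(\alpha,d)-\psi^{-1}(d)\big)}{\mu^{-1}(d)}.$$ Then $\alpha\mapsto f_0^*(\alpha,d)$ is strictly concave on $(0,1-d/\varphi_{\max})$.
   Context: All parameters $s_{\rm in},\gamma,\beta,\varphi_{\max},k_s,\rho_{\max},k_v,q_{\min},\mu_{\max}$ are strictly positive. $\varphi(s)=\frac{\varphi_{\max}s}{k_s+s}$, $\rho(v)=\frac{\rho_{\max}v}{k_v+v}$ on $[0,\infty)$, $\mu(q)=\mu_{\max}(1-q_{\min}/q)$ on $[q_{\min},\infty)$, with inverses $\varphi^{-1}:[0,\varphi_{\max})\to[0,\infty)$, $\mu^{-1}:[0,\mu_{\max})\to[q_{\min},\infty)$, $\rho^{-1}:[0,\rho_{\max})\to[0,\infty)$. $\psi_{\max}=\frac{\mu_{\max}\rho_{\max}}{\rho_{\max}+q_{\min}\mu_{\max}}$ and $\psi^{-1}(y)=\rho^{-1}(y\,\mu^{-1}(y))$ for $y\in[0,\psi_{\max})$. The quantity $f_0^*(\alpha,d)$ is the algal harvest rate $d\cdot c^*$ at the coexistence equilibrium of the consortium model under constant controls $(\alpha,d)$. *)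

theory Defs
  imports "HOL-Analysis.Analysis"
begin

definition phi :: "real \<Rightarrow> real \<Rightarrow> real \<Rightarrow> real" where
  "phi phimax ks s = phimax * s / (ks + s)"

definition phi_inv :: "real \<Rightarrow> real \<Rightarrow> real \<Rightarrow> real" where
  "phi_inv phimax ks y = ks * y / (phimax - y)"

definition rho :: "real \<Rightarrow> real \<Rightarrow> real \<Rightarrow> real" where
  "rho rhomax kv v = rhomax * v / (kv + v)"

definition rho_inv :: "real \<Rightarrow> real \<Rightarrow> real \<Rightarrow> real" where
  "rho_inv rhomax kv y = kv * y / (rhomax - y)"

definition mu :: "real \<Rightarrow> real \<Rightarrow> real \<Rightarrow> real" where
  "mu mumax qmin q = mumax * (1 - qmin / q)"

definition mu_inv :: "real \<Rightarrow> real \<Rightarrow> real \<Rightarrow> real" where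
  "mu_inv mumax qmin y = mumax * qmin / (mumax - y)"

definition psi_max :: "real \<Rightarrow> real \<Rightarrow> real \<Rightarrow> real" where
  "psi_max mumax rhomax qmin = mumax * rhomax / (rhomax + qmin * mumax)"

definition psi_inv :: "real \<Rightarrow> real \<Rightarrow> real \<Rightarrow> real \<Rightarrow> real \<Rightarrow> real" where
  "psi_inv rhomax kv mumax qmin y = rho_inv rhomax kv (y * mu_inv mumax qmin y)"

definition v_in_star :: "real \<Rightarrow> real \<Rightarrow> real \<Rightarrow> real \<Rightarrow> real \<Rightarrow> real \<Rightarrow> real \<Rightarrow> real" where
  "v_in_star s_in beta gamma phimax ks alpha d =
     alpha * beta * gamma * (s_in - phi_inv phimax ks (d / (1 - alpha)))"

definition f0_star :: "real \<Rightarrow> real \<Rightarrow> real \<Rightarrow> real \<Rightarrow> real \<Rightarrow> real \<Rightarrow> real \<Rightarrow> real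
    \<Rightarrow> real \<Rightarrow> real \<Rightarrow> real \<Rightarrow> real" where
  "f0_star s_in beta gamma phimax ks rhomax kv mumax qmin alpha d =
     d * (v_in_star s_in beta gamma phimax ks alpha d - psi_inv rhomax kv mumax qmin d)
       / mu_inv mumax qmin d"

definition strictly_concave_on :: "real set \<Rightarrow> (real \<Rightarrow> real) \<Rightarrow> bool" where
  "strictly_concave_on S f \<longleftrightarrow>
     (\<forall>x\<in>S. \<forall>y\<in>S. x \<noteq> y \<longrightarrow> (\<forall>t::real. 0 < t \<and> t < 1 \<longrightarrow>
        f ((1 - t) * x + t * y) > (1 - t) * f x + t * f y))"

end

theory Submission
  imports Defs
begin

lemma inv_strict:
  fixes w1 w2 t :: real
  assumes "w1 > 0" "w2 > 0" "w1 \<noteq> w2" "0 < t" "t < 1"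
  shows "1/((1-t)*w1+t*w2) < (1-t)/w1 + t/w2"
proof -
  have m: "(1-t)*w1+t*w2 > 0" using assms by (smt (verit) mult_pos_pos)
  have sq: "(1-t)*t*(w1-w2)^2 > 0" using assms by simp
  have "((1-t)/w1 + t/w2) * ((1-t)*w1+t*w2) - 1 = (1-t)*t*(w1-w2)^2/(w1*w2)"
    using assms by (simp add: field_simps power2_eq_square)
  also have "\<dots> > 0" using sq assms by simp
  finally have "((1-t)/w1 + t/w2) * ((1-t)*w1+t*w2) > 1" by simp
  thus ?thesis using m by (simp add: divide_less_eq)
qed

theorem lemma1:
  fixes s_in gamma beta phimax ks rhomax kv qmin mumax d :: real
  assumes "s_in > 0" "gamma > 0" "beta > 0" "phimax > 0" "ks > 0"
    "rhomax > 0" "kv > 0" "qmin > 0" "mumax > 0"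
    and "0 < d" "d < psi_max mumax rhomax qmin"
  shows "strictly_concave_on {0<..<1 - d / phimax}
           (\<lambda>alpha. f0_star s_in beta gamma phimax ks rhomax kv mumax qmin alpha d)"
proof -
  define C where "C = d / mu_inv mumax qmin d"
  define P where "P = psi_inv rhomax kv mumax qmin d"
  define w where "w = (\<lambda>a::real. phimax*(1-a) - d)"
  define K where "K = C*beta*gamma*ks*d*(phimax-d)/phimax"
  define AA where "AA = C * beta * gamma * s_in"
  define BB where "BB = C*(beta*gamma*ks*d/phimax - P)"
  have psi_lt: "psi_max mumax rhomax qmin < mumax"
    using assms unfolding psi_max_def by (simp add: divide_less_eq)
  have dmu: "d < mumax" using psi_lt assms by linarith
  have Cpos: "C > 0" unfolding C_def mu_inv_def using assms dmu by simp
  have f: "f0_star s_in beta gamma phimax ks rhomax kv mumax qmin a d = AA*a + BB - K / w a"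
    if "a \<in> {0<..<1 - d / phimax}" for a
  proof -
    from that have a0: "0 < a" and a1: "a < 1 - d/phimax" by auto
    have dp: "d < phimax" using a0 a1 assms
      by (smt (verit) divide_less_eq_1_pos)
    have wp: "w a > 0" unfolding w_def using a1 assms
      by (simp add: field_simps)
    have am: "1 - a > 0" using a1 assms dp by (smt (verit) divide_pos_pos)
    have pi: "phi_inv phimax ks (d/(1-a)) = ks*d / w a"
    proof -
      have e: "phimax - d/(1-a) = w a / (1-a)" unfolding w_def using am
        by (simp add: field_simps)
      show ?thesis unfolding phi_inv_def e using am wp by (simp add: field_simps)
    qed
    have "f0_star s_in beta gamma phimax ks rhomax kv mumax qmin a d
        = C*(a*beta*gamma*(s_in - ks*d/w a) - P)"
      unfolding f0_star_def v_in_star_def pi C_def P_def by (simp add: field_simps)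
    also have "\<dots> = AA*a + BB - K / w a"
    proof -
      have ae: "a = (phimax - d - w a)/phimax" unfolding w_def using assms
        by (simp add: field_simps)
      have k: "a * (ks*d/w a) = ks*d*(phimax-d)/(phimax*w a) - ks*d/phimax"
        apply (subst ae) using wp assms by (simp add: field_simps)
      have "C*(a*beta*gamma*(s_in - ks*d/w a) - P)
          = C*beta*gamma * s_in * a - C*beta*gamma*(a * (ks*d/w a)) - C*P"
        by (simp add: algebra_simps)
      also have "\<dots> = AA*a + BB - K / w a"
        unfolding k AA_def BB_def K_def by (simp add: algebra_simps)
      finally show ?thesis .
    qed
    finally show ?thesis .
  qed
  show ?thesis unfolding strictly_concave_on_def
  proof (intro ballI impI allI)
    fix x y t :: real
    assume x: "x \<in> {0<..<1 - d / phimax}" and y: "y \<in> {0<..<1 - d / phimax}"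
      and xy: "x \<noteq> y" and t: "0 < t \<and> t < 1"
    have z: "(1-t)*x + t*y \<in> {0<..<1 - d / phimax}"
    proof -
      have "(1-t)*x + t*y \<in> closed_segment x y"
        unfolding closed_segment_def using t by auto
      moreover have "convex {0<..<1 - d / phimax}" by simp
      ultimately show ?thesis using x y
        by (meson convex_contains_segment subsetD)
    qed
    have wx: "w x > 0" "w y > 0" unfolding w_def using x y assms
      by (auto simp: field_simps)
    have wne: "w x \<noteq> w y" unfolding w_def using xy assms by auto
    have wz: "w ((1-t)*x + t*y) = (1-t)*w x + t*w y" unfolding w_def
      by (simp add: algebra_simps)
    have dp: "d < phimax" using x assms
      by (smt (verit) divide_less_eq_1_pos greaterThanLessThan_iff)
    have Kp: "K > 0" unfolding K_def using Cpos assms dp by simp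
    have ineq: "1 / w ((1-t)*x + t*y) < (1-t)/w x + t/w y"
      unfolding wz using inv_strict[OF wx wne] t by auto
    have "K / w ((1-t)*x + t*y) < (1-t)*(K/w x) + t*(K/w y)"
    proof -
      have "K * (1 / w ((1-t)*x + t*y)) < K * ((1-t)/w x + t/w y)"
        using ineq Kp by (simp only: mult_strict_left_mono)
      thus ?thesis by (simp add: algebra_simps)
    qed
    thus "f0_star s_in beta gamma phimax ks rhomax kv mumax qmin ((1 - t) * x + t * y) d
        > (1 - t) * f0_star s_in beta gamma phimax ks rhomax kv mumax qmin x d +
          t * f0_star s_in beta gamma phimax ks rhomax kv mumax qmin y d"
      unfolding f[OF z] f[OF x] f[OF y] by (simp add: algebra_simps)
  qed
qed

end
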